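(* Let $n\ge2$, $d\ge 3$, $\vec r$ a weight vector and $f\in M_{\ge0}(\vec r)$ nonzero. Then the coefficient of $x_n^d$ in $f$ is zero, so $f=\sum_{j=1}^{d}x_n^{d-j}h_j(x_0,\dots,x_{n-1})$ with $h_j$ homogeneous of degree $j$; write $q=h_2$, a quadratic form in $x_0,\dots,x_{n-1}$. Let $m_0$ be the smallest integer with $m_0>\frac{2(n+1)}{d}-1$. Then $\operatorname{rank}(q)\le m_0$. If $f\in M_{>0}(\vec r)$, the same conclusion holds with $m_0$ the smallest integer with $m_0\ge\frac{2(n+1)}{d}-1$.
   Context: A weight vector is $\vec r=(r_0,\dots,r_n)\in\mathbb{Z}^{n+1}$ with $r_0\ge r_1\ge\cdots\ge r_n$, $\vec r\neq\vec 0$ and $\sum_j r_j=0$. $M_{\ge0}(\vec r)$ (resp. $M_{>0}(\vec r)$) is the set of $f=\sum a_{i_0,\dots,i_n}x_0^{i_0}\cdots x_n^{i_n}\in\mathbb{C}[x_0,\dots,x_n]_d$ such that $\sum_j r_ji_j\ge 0$ (resp. $>0$) for every $(i_0,\dots,i_n)$ with $a_{i_0,\dots,i_n}\neq0$. The rank of a quadratic form $q=\sum_{i,j}a_{ij}x_ix_j$ ($a_{ij}=a_{ji}$) is the rank of the symmetric matrix $(a_{ij})$. *)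

theory Defs
  imports Complex_Main "Jordan_Normal_Form.DL_Rank"
begin

text \<open>A form of degree d in the variables x_0,...,x_n is represented by its coefficient
  function on exponent vectors alpha :: nat => nat (alpha j = exponent of x_j).\<close>

definition is_monomial_exp :: "nat \<Rightarrow> nat \<Rightarrow> (nat \<Rightarrow> nat) \<Rightarrow> bool" where
  "is_monomial_exp n d \<alpha> \<longleftrightarrow> (\<forall>j>n. \<alpha> j = 0) \<and> (\<Sum>j\<le>n. \<alpha> j) = d"

definition homog_form :: "nat \<Rightarrow> nat \<Rightarrow> ((nat \<Rightarrow> nat) \<Rightarrow> complex) \<Rightarrow> bool" where
  "homog_form n d f \<longleftrightarrow> (\<forall>\<alpha>. f \<alpha> \<noteq> 0 \<longrightarrow> is_monomial_exp n d \<alpha>)"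

definition weight_vector :: "nat \<Rightarrow> (nat \<Rightarrow> int) \<Rightarrow> bool" where
  "weight_vector n r \<longleftrightarrow> (\<forall>i<n. r (Suc i) \<le> r i) \<and> (\<exists>j\<le>n. r j \<noteq> 0) \<and> (\<Sum>j\<le>n. r j) = 0"

definition M_ge0 :: "nat \<Rightarrow> nat \<Rightarrow> (nat \<Rightarrow> int) \<Rightarrow> ((nat \<Rightarrow> nat) \<Rightarrow> complex) \<Rightarrow> bool" where
  "M_ge0 n d r f \<longleftrightarrow> homog_form n d f \<and> (\<forall>\<alpha>. f \<alpha> \<noteq> 0 \<longrightarrow> (\<Sum>j\<le>n. r j * int (\<alpha> j)) \<ge> 0)"

definition M_gt0 :: "nat \<Rightarrow> nat \<Rightarrow> (nat \<Rightarrow> int) \<Rightarrow> ((nat \<Rightarrow> nat) \<Rightarrow> complex) \<Rightarrow> bool" where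
  "M_gt0 n d r f \<longleftrightarrow> homog_form n d f \<and> (\<forall>\<alpha>. f \<alpha> \<noteq> 0 \<longrightarrow> (\<Sum>j\<le>n. r j * int (\<alpha> j)) > 0)"

definition pure_power :: "nat \<Rightarrow> nat \<Rightarrow> nat \<Rightarrow> nat" where
  "pure_power n d = (\<lambda>k. if k = n then d else 0)"

definition quad_exp :: "nat \<Rightarrow> nat \<Rightarrow> nat \<Rightarrow> nat \<Rightarrow> nat \<Rightarrow> nat" where
  "quad_exp n d i j = (\<lambda>k. (if k = i then 1 else 0) + (if k = j then 1 else 0) + (if k = n then d - 2 else 0))"

text \<open>Symmetric n x n matrix (a_ij), i,j in {0..n-1}, of q = h_2 = sum a_ij x_i x_j,
  where h_2 is the coefficient of x_n^(d-2) in f.\<close>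
definition h2_matrix :: "nat \<Rightarrow> nat \<Rightarrow> ((nat \<Rightarrow> nat) \<Rightarrow> complex) \<Rightarrow> complex mat" where
  "h2_matrix n d f = mat n n (\<lambda>(i, j). if i = j then f (quad_exp n d i i) else f (quad_exp n d i j) / 2)"

definition quad_rank :: "nat \<Rightarrow> nat \<Rightarrow> ((nat \<Rightarrow> nat) \<Rightarrow> complex) \<Rightarrow> nat" where
  "quad_rank n d f = vec_space.rank n (h2_matrix n d f)"

end

theory Submission imports Defs begin

lemma rank_block:
  fixes A :: "complex mat"
  assumes "A \<in> carrier_mat n n" "\<And>a b. a<n \<Longrightarrow> b<n \<Longrightarrow> a \<ge> i \<Longrightarrow> b \<ge> k \<Longrightarrow> A $$ (a,b) = 0"
  shows "vec_space.rank n A \<le> i + k"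
  using assms
proof (induction i arbitrary: A)
  case 0
  then show ?case
  proof (induction k arbitrary: A)
    case 0
    then have "A = 0\<^sub>m n n" by (intro eq_matI) auto
    then show ?case using vec_space.rank_0I by simp
  next
    case (Suc k)
    define B where "B = mat n n (\<lambda>(a,b). if b = k then A $$ (a,b) else 0)"
    define A' where "A' = mat n n (\<lambda>(a,b). if b = k then 0 else A $$ (a,b))"
    have AB: "A = A' + B" using Suc.prems(1) by (intro eq_matI) (auto simp: A'_def B_def)
    have "vec_space.rank n A' \<le> 0 + k"
      by (rule Suc.IH) (use Suc.prems in \<open>auto simp: A'_def\<close>)
    moreover have "vec_space.rank n B \<le> 1"
      by (rule vec_space.rank_le_1_product_entries[where f="\<lambda>a. A $$ (a,k)" and g="\<lambda>b. if b = k then 1 else 0"])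
        (auto simp: B_def)
    moreover have "vec_space.rank n A \<le> vec_space.rank n A' + vec_space.rank n B"
      unfolding AB by (rule vec_space.rank_subadditive) (auto simp: A'_def B_def)
    ultimately show ?case by simp
  qed
next
  case (Suc i)
  define B where "B = mat n n (\<lambda>(a,b). if a = i then A $$ (a,b) else 0)"
  define A' where "A' = mat n n (\<lambda>(a,b). if a = i then 0 else A $$ (a,b))"
  have AB: "A = A' + B" using Suc.prems(1) by (intro eq_matI) (auto simp: A'_def B_def)
  have "vec_space.rank n A' \<le> i + k"
    by (rule Suc.IH) (use Suc.prems in \<open>auto simp: A'_def\<close>)
  moreover have "vec_space.rank n B \<le> 1"
    by (rule vec_space.rank_le_1_product_entries[where f="\<lambda>a. if a = i then 1 else 0" and g="\<lambda>b. A $$ (i,b)"])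
      (auto simp: B_def)
  moreover have "vec_space.rank n A \<le> vec_space.rank n A' + vec_space.rank n B"
    unfolding AB by (rule vec_space.rank_subadditive) (auto simp: A'_def B_def)
  ultimately show ?case by simp
qed

lemma key:
  fixes A :: "complex mat" and r :: "nat \<Rightarrow> int" and T :: "int \<Rightarrow> bool"
  assumes A: "A \<in> carrier_mat n n"
    and Tmono: "\<And>x y. T x \<Longrightarrow> x \<le> y \<Longrightarrow> T y"
    and nz: "\<And>a b. a<n \<Longrightarrow> b<n \<Longrightarrow> A $$ (a,b) \<noteq> 0 \<Longrightarrow> T (r a + r b)"
    and anti: "\<And>i j. i \<le> j \<Longrightarrow> j < n \<Longrightarrow> r j \<le> r i"
  shows "\<exists>s\<le>n. vec_space.rank n A \<le> s \<and> (\<forall>i<s. T (r i + r (s - 1 - i)))"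
proof -
  define S where "S = {s. s \<le> n \<and> (\<forall>i<s. T (r i + r (s - 1 - i)))}"
  have fin: "finite S" unfolding S_def by auto
  have "0 \<in> S" unfolding S_def by auto
  define s where "s = Max S"
  have sS: "s \<in> S" unfolding s_def using fin \<open>0 \<in> S\<close> Max_in by blast
  have smax: "\<And>t. t \<in> S \<Longrightarrow> t \<le> s" unfolding s_def using fin by auto
  have "vec_space.rank n A \<le> s"
  proof (cases "s = n")
    case True
    then show ?thesis using vec_space.rank_le_nc[OF A] by simp
  next
    case False
    then have sn: "s < n" using sS unfolding S_def by auto
    have "Suc s \<notin> S" using smax by fastforce
    then obtain i where i: "i < Suc s" "\<not> T (r i + r (s - i))"
      using sn unfolding S_def by auto
    have "vec_space.rank n A \<le> i + (s - i)"
    proof (rule rank_block[OF A])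
      fix a b assume ab: "a < n" "b < n" "i \<le> a" "s - i \<le> b"
      show "A $$ (a, b) = 0"
      proof (rule ccontr)
        assume "A $$ (a, b) \<noteq> 0"
        then have "T (r a + r b)" using nz ab by auto
        moreover have "r a \<le> r i" "r b \<le> r (s - i)" using anti ab by auto
        ultimately have "T (r i + r (s - i))" using Tmono by fastforce
        then show False using i by simp
      qed
    qed
    then show ?thesis using i by simp
  qed
  then show ?thesis using sS unfolding S_def by auto
qed

lemma sum_upper:
  fixes r :: "nat \<Rightarrow> int"
  assumes "s \<le> n" "(\<Sum>j\<le>n. r j) = 0" "\<And>j. j \<le> n \<Longrightarrow> r n \<le> r j"
  shows "(\<Sum>i<s. r i) \<le> int (n + 1 - s) * (- r n)"
proof -
  have "{..n} = {..<s} \<union> {s..n}" using assms(1) by auto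
  then have "(\<Sum>j\<le>n. r j) = (\<Sum>i<s. r i) + (\<Sum>j\<in>{s..n}. r j)"
    by (simp add: sum.union_disjoint ivl_disj_int)
  moreover have "(\<Sum>j\<in>{s..n}. r j) \<ge> (\<Sum>j\<in>{s..n}. r n)"
    by (rule sum_mono) (use assms in auto)
  moreover have "(\<Sum>j\<in>{s..n}. r n) = int (n + 1 - s) * r n" by simp
  ultimately show ?thesis using assms(2) by simp
qed

lemma sum_lower:
  fixes r :: "nat \<Rightarrow> int" and T :: "int \<Rightarrow> bool"
  assumes "\<forall>i<s. T (r i + r (s - 1 - i))"
  shows "(\<Sum>i<s. (r i + r (s - 1 - i))) = 2 * (\<Sum>i<s. r i)"
proof -
  have "(\<Sum>i<s. r (s - 1 - i)) = (\<Sum>i<s. r (s - Suc i))" by simp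
  also have "\<dots> = (\<Sum>i<s. r i)" by (rule sum.nat_diff_reindex)
  finally show ?thesis by (simp add: sum.distrib)
qed

theorem lemma5p1:
  fixes n d :: nat and r :: "nat \<Rightarrow> int" and f :: "(nat \<Rightarrow> nat) \<Rightarrow> complex"
  assumes "n \<ge> 2" and "d \<ge> 3"
    and "weight_vector n r"
    and "M_ge0 n d r f"
    and "f \<noteq> (\<lambda>_. 0)"
  shows "f (pure_power n d) = 0
    \<and> int (quad_rank n d f) \<le> \<lfloor>2 * real (n + 1) / real d - 1\<rfloor> + 1
    \<and> (M_gt0 n d r f \<longrightarrow> int (quad_rank n d f) \<le> \<lceil>2 * real (n + 1) / real d - 1\<rceil>)"
proof -
  have stp: "\<forall>i<n. r (Suc i) \<le> r i" and sum0: "(\<Sum>j\<le>n. r j) = 0" and ex: "\<exists>j\<le>n. r j \<noteq> 0"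
    using assms(3) unfolding weight_vector_def by auto
  have anti: "r j \<le> r i" if "i \<le> j" "j \<le> n" for i j
    using that
  proof (induction j rule: dec_induct)
    case base then show ?case by simp
  next
    case (step k) then show ?case using stp[rule_format, of k] by simp
  qed
  have rn: "r n < 0"
  proof (rule ccontr)
    assume "\<not> r n < 0"
    then have nn: "\<forall>j\<le>n. r j \<ge> 0" using anti by force
    then have "\<forall>j\<in>{..n}. r j = 0" using sum_nonneg_eq_0_iff[of "{..n}" r] sum0 by auto
    then show False using ex by auto
  qed
  have ge0: "\<And>\<alpha>. f \<alpha> \<noteq> 0 \<Longrightarrow> (\<Sum>j\<le>n. r j * int (\<alpha> j)) \<ge> 0"
    using assms(4) unfolding M_ge0_def by auto
  have P1: "f (pure_power n d) = 0"
  proof (rule ccontr)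
    assume "f (pure_power n d) \<noteq> 0"
    then have "(\<Sum>j\<le>n. r j * int (pure_power n d j)) \<ge> 0" by (rule ge0)
    moreover have "(\<Sum>j\<le>n. r j * int (pure_power n d j)) = r n * int d"
      unfolding pure_power_def by (simp add: if_distrib cong: if_cong)
    moreover have "r n * int d < 0" using rn assms(2) by (simp add: mult_neg_pos)
    ultimately show False by simp
  qed
  define c where "c = int (d - 2) * (- r n)"
  have qw: "(\<Sum>j\<le>n. r j * int (quad_exp n d a b j)) = r a + r b - c" if "a < n" "b < n" for a b
  proof -
    have "(\<Sum>j\<le>n. r j * int (quad_exp n d a b j)) =
      (\<Sum>j\<le>n. (if j = a then r j else 0) + (if j = b then r j else 0) + (if j = n then r j * int (d - 2) else 0))"
      by (rule sum.cong) (auto simp: quad_exp_def algebra_simps)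
    also have "\<dots> = r a + r b + r n * int (d - 2)"
      using that by (simp add: sum.distrib)
    finally show ?thesis unfolding c_def by simp
  qed
  define A where "A = h2_matrix n d f"
  have A: "A \<in> carrier_mat n n" unfolding A_def h2_matrix_def by simp
  have Anz: "f (quad_exp n d a b) \<noteq> 0" if "a < n" "b < n" "A $$ (a,b) \<noteq> 0" for a b
    using that unfolding A_def h2_matrix_def by (auto split: if_splits)
  have rk: "quad_rank n d f = vec_space.rank n A" unfolding quad_rank_def A_def by simp
  have anti': "\<And>i j. i \<le> j \<Longrightarrow> j < n \<Longrightarrow> r j \<le> r i" using anti by simp
  have rlow: "\<And>j. j \<le> n \<Longrightarrow> r n \<le> r j" using anti by simp
  have cpos: "c = int (d - 2) * (- r n)" by (simp add: c_def)
  have Rpos: "- r n > 0" using rn by simp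
  have "\<exists>s\<le>n. vec_space.rank n A \<le> s \<and> (\<forall>i<s. c \<le> r i + r (s - 1 - i))"
  proof (rule key[OF A])
    show "\<And>x y. c \<le> x \<Longrightarrow> x \<le> y \<Longrightarrow> c \<le> y" by simp
    show "\<And>i j. i \<le> j \<Longrightarrow> j < n \<Longrightarrow> r j \<le> r i" by (rule anti')
    fix a b assume ab: "a < n" "b < n" "A $$ (a, b) \<noteq> 0"
    have "0 \<le> (\<Sum>j\<le>n. r j * int (quad_exp n d a b j))" by (rule ge0[OF Anz[OF ab]])
    then show "c \<le> r a + r b" using qw[OF ab(1,2)] by simp
  qed
  then obtain s where s: "s \<le> n" "vec_space.rank n A \<le> s" "\<forall>i<s. c \<le> r i + r (s - 1 - i)"
    by blast
  have "int s * c \<le> (\<Sum>i<s. (r i + r (s - 1 - i)))"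
    using sum_mono[of "{..<s}" "\<lambda>_. c" "\<lambda>i. r i + r (s - 1 - i)"] s(3) by simp
  also have "\<dots> = 2 * (\<Sum>i<s. r i)" by (rule sum_lower[OF s(3)])
  also have "\<dots> \<le> 2 * (int (n + 1 - s) * (- r n))" using sum_upper[OF s(1) sum0 rlow] by linarith
  finally have X: "int s * c \<le> 2 * (int (n + 1 - s) * (- r n))" .
  have "(int s * int (d - 2)) * (- r n) \<le> (2 * int (n + 1 - s)) * (- r n)"
    using X unfolding c_def by (simp only: mult.assoc)
  then have "int s * int (d - 2) \<le> 2 * int (n + 1 - s)"
    using Rpos mult_le_cancel_right_pos by blast
  then have "int (s * (d - 2)) \<le> int (2 * (n + 1 - s))" by simp
  then have Y: "s * (d - 2) \<le> 2 * (n + 1 - s)" by (simp only: of_nat_le_iff)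
  obtain e where e: "d = e + 2" using assms(2) by (metis add.commute le_Suc_ex numeral_2_eq_2 le_trans le_SucI numeral_3_eq_3 le_refl)
  have sd: "s * d \<le> 2 * (n + 1)" using Y s(1) unfolding e by (simp add: algebra_simps)
  have P2: "int (quad_rank n d f) \<le> \<lfloor>2 * real (n + 1) / real d - 1\<rfloor> + 1"
  proof -
    have "real s \<le> 2 * real (n + 1) / real d"
      proof -
      have "real (s * d) \<le> real (2 * (n + 1))" using sd by (simp only: of_nat_le_iff)
      then show ?thesis using assms(2) by (simp add: pos_le_divide_eq)
    qed
    then have "int s \<le> \<lfloor>2 * real (n + 1) / real d\<rfloor>" by (simp add: le_floor_iff)
    moreover have "\<lfloor>2 * real (n + 1) / real d - 1\<rfloor> + 1 = \<lfloor>2 * real (n + 1) / real d\<rfloor>" by simp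
    ultimately show ?thesis using rk s(2) by simp
  qed
  have P3: "int (quad_rank n d f) \<le> \<lceil>2 * real (n + 1) / real d - 1\<rceil>" if gt: "M_gt0 n d r f"
  proof -
    have gt0: "\<And>\<alpha>. f \<alpha> \<noteq> 0 \<Longrightarrow> (\<Sum>j\<le>n. r j * int (\<alpha> j)) > 0"
      using gt unfolding M_gt0_def by auto
    have "\<exists>s\<le>n. vec_space.rank n A \<le> s \<and> (\<forall>i<s. c < r i + r (s - 1 - i))"
    proof (rule key[OF A])
      show "\<And>x y. c < x \<Longrightarrow> x \<le> y \<Longrightarrow> c < y" by simp
      show "\<And>i j. i \<le> j \<Longrightarrow> j < n \<Longrightarrow> r j \<le> r i" by (rule anti')
      fix a b assume ab: "a < n" "b < n" "A $$ (a, b) \<noteq> 0"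
      have "0 < (\<Sum>j\<le>n. r j * int (quad_exp n d a b j))" by (rule gt0[OF Anz[OF ab]])
      then show "c < r a + r b" using qw[OF ab(1,2)] by simp
    qed
    then obtain s where s: "s \<le> n" "vec_space.rank n A \<le> s" "\<forall>i<s. c < r i + r (s - 1 - i)"
      by blast
    have sd: "s * d < 2 * (n + 1)"
    proof (cases "s = 0")
      case True then show ?thesis by simp
    next
      case False
      have "int s * c < (\<Sum>i<s. (r i + r (s - 1 - i)))"
        using sum_strict_mono[of "{..<s}" "\<lambda>_. c" "\<lambda>i. r i + r (s - 1 - i)"] s(3) False by force
      also have "\<dots> = 2 * (\<Sum>i<s. r i)" by (rule sum_lower[OF s(3)])
      also have "\<dots> \<le> 2 * (int (n + 1 - s) * (- r n))" using sum_upper[OF s(1) sum0 rlow] by linarith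
      finally have X: "int s * c < 2 * (int (n + 1 - s) * (- r n))" .
      have "(int s * int (d - 2)) * (- r n) < (2 * int (n + 1 - s)) * (- r n)"
        using X unfolding c_def by (simp only: mult.assoc)
      then have "int s * int (d - 2) < 2 * int (n + 1 - s)"
        using Rpos mult_less_cancel_right_pos by blast
      then have "int (s * (d - 2)) < int (2 * (n + 1 - s))" by simp
      then have Y: "s * (d - 2) < 2 * (n + 1 - s)" by (simp only: of_nat_less_iff)
      obtain e where e: "d = e + 2" using assms(2) by (metis add.commute le_Suc_ex numeral_2_eq_2 le_trans le_SucI numeral_3_eq_3 le_refl)
      show ?thesis using Y s(1) unfolding e by (simp add: algebra_simps)
    qed
    have "real s < 2 * real (n + 1) / real d"
      proof -
      have "real (s * d) < real (2 * (n + 1))" using sd by (simp only: of_nat_less_iff)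
      then show ?thesis using assms(2) by (simp add: pos_less_divide_eq)
    qed
    then have "int s \<le> \<lceil>2 * real (n + 1) / real d - 1\<rceil>" by (simp add: le_ceiling_iff less_ceiling_iff)
    then show ?thesis using rk s(2) by simp
  qed
  show ?thesis using P1 P2 P3 by blast
qed

end
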